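(* Let $n\ge1$, $\mathbf{x},\mathbf{x}'\in\mathbb{R}^n$, let $P$ be the cyclic shift matrix ($P\mathbf{v}=[v_n,v_1,\ldots,v_{n-1}]^T$), let $h:\mathbb{R}\to\mathbb{R}$, and let $\kappa$ be the radial basis function kernel $\kappa(\mathbf{u},\mathbf{v})=h(\|\mathbf{u}-\mathbf{v}\|^2)$. Define $\mathbf{k}^{\mathbf{xx}'}\in\mathbb{R}^n$ by $k^{\mathbf{xx}'}_i=\kappa(\mathbf{x}',P^{i-1}\mathbf{x})$. Then $$\mathbf{k}^{\mathbf{xx}'}=h\!\left(\|\mathbf{x}\|^2+\|\mathbf{x}'\|^2-2\,\mathcal{F}^{-1}\left(\hat{\mathbf{x}}^{*}\odot\hat{\mathbf{x}}'\right)\right),$$ with $h$ applied element-wise and the scalars added to every entry. In particular, for the Gaussian kernel $\kappa(\mathbf{u},\mathbf{v})=\exp\left(-\frac{1}{\sigma^2}\|\mathbf{u}-\mathbf{v}\|^2\right)$ ($\sigma>0$), $\mathbf{k}^{\mathbf{xx}'}=\exp\left(-\frac{1}{\sigma^2}\left(\|\mathbf{x}\|^2+\|\mathbf{x}'\|^2-2\mathcal{F}^{-1}(\hat{\mathbf{x}}^{*}\odot\hat{\mathbf{x}}')\right)\right)$.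
   Context: For $\mathbf{v}\in\mathbb{C}^n$, $\hat{\mathbf{v}}=\mathcal{F}(\mathbf{v})$ is the discrete Fourier transform, $\hat{v}_k=\sum_{j=1}^n v_j e^{-2\pi \mathrm{i}(j-1)(k-1)/n}$, and $\mathcal{F}^{-1}$ is its inverse. $^{*}$ denotes element-wise complex conjugation and $\odot$ element-wise product; $\|\cdot\|$ is the Euclidean norm. *)

theory Defs
  imports Complex_Main
begin

(* Vectors in R^n / C^n are functions nat => real / complex, entries indexed 0..n-1
   (paper index j corresponds to j-1 here). *)

definition vnorm :: "nat \<Rightarrow> (nat \<Rightarrow> real) \<Rightarrow> real" where
  "vnorm n v = sqrt (\<Sum>j<n. (v j)^2)"

definition dft :: "nat \<Rightarrow> (nat \<Rightarrow> complex) \<Rightarrow> (nat \<Rightarrow> complex)" where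
  "dft n v = (\<lambda>k. \<Sum>j<n. v j * cis (- 2 * pi * real j * real k / real n))"

definition idft :: "nat \<Rightarrow> (nat \<Rightarrow> complex) \<Rightarrow> (nat \<Rightarrow> complex)" where
  "idft n w = (\<lambda>j. (1 / of_nat n) * (\<Sum>k<n. w k * cis (2 * pi * real j * real k / real n)))"

(* cyclic shift P v = [v_n, v_1, ..., v_{n-1}] (0-based: (P v)_i = v_{(i-1) mod n}) *)
definition cshift :: "nat \<Rightarrow> (nat \<Rightarrow> real) \<Rightarrow> (nat \<Rightarrow> real)" where
  "cshift n v = (\<lambda>i. v ((i + n - 1) mod n))"

definition vdiff :: "(nat \<Rightarrow> real) \<Rightarrow> (nat \<Rightarrow> real) \<Rightarrow> (nat \<Rightarrow> real)" where
  "vdiff u v = (\<lambda>i. u i - v i)"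

definition rbf_kernel :: "(real \<Rightarrow> real) \<Rightarrow> nat \<Rightarrow> (nat \<Rightarrow> real) \<Rightarrow> (nat \<Rightarrow> real) \<Rightarrow> real" where
  "rbf_kernel h n u v = h ((vnorm n (vdiff u v))^2)"

definition gauss_kernel :: "real \<Rightarrow> nat \<Rightarrow> (nat \<Rightarrow> real) \<Rightarrow> (nat \<Rightarrow> real) \<Rightarrow> real" where
  "gauss_kernel \<sigma> n u v = exp (- (1 / \<sigma>^2) * (vnorm n (vdiff u v))^2)"

(* the vector k^{xx'} for kernel kappa: entry i (0-based) is kappa(x', P^i x) *)
definition kvec :: "(nat \<Rightarrow> (nat \<Rightarrow> real) \<Rightarrow> (nat \<Rightarrow> real) \<Rightarrow> real) \<Rightarrow> nat
    \<Rightarrow> (nat \<Rightarrow> real) \<Rightarrow> (nat \<Rightarrow> real) \<Rightarrow> (nat \<Rightarrow> real)" where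
  "kvec \<kappa> n x x' = (\<lambda>i. \<kappa> n x' ((cshift n ^^ i) x))"

definition xcorr :: "nat \<Rightarrow> (nat \<Rightarrow> real) \<Rightarrow> (nat \<Rightarrow> real) \<Rightarrow> (nat \<Rightarrow> complex)" where
  "xcorr n x x' = idft n (\<lambda>k. cnj (dft n (\<lambda>j. complex_of_real (x j)) k)
                              * dft n (\<lambda>j. complex_of_real (x' j)) k)"

end

theory Submission
  imports Defs "HOL-Library.Real_Mod"
begin

lemma orth:
  assumes "n \<ge> (1::nat)"
  shows "(\<Sum>k<n. cis (2*pi*real k * of_int d / real n)) = (if int n dvd d then of_nat n else 0)"
proof -
  define z where "z = cis (2*pi*of_int d / real n)"
  have pw: "cis (2*pi*real k * of_int d / real n) = z ^ k" for k
    unfolding z_def DeMoivre by (simp add: field_simps)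
  have zn: "z ^ n = 1"
  proof -
    have "z ^ n = cis (2*pi*of_int d)" unfolding z_def DeMoivre using assms by (simp add: field_simps)
    also have "\<dots> = 1" by simp
    finally show ?thesis .
  qed
  show ?thesis
  proof (cases "int n dvd d")
    case True
    then obtain m where m: "d = int n * m" by auto
    have "cis (2*pi*real k * of_int d / real n) = 1" for k
    proof -
      have "2*pi*real k * of_int d / real n = 2*pi*of_int (int k * m)" using assms by (simp add: m field_simps)
      then show ?thesis by simp
    qed
    then show ?thesis using True by simp
  next
    case False
    have "z \<noteq> 1"
    proof
      assume "z = 1"
      then obtain m where "2*pi*of_int d / real n = of_int m * (2*pi)" unfolding z_def cis_eq_1_iff by blast
      then have "real_of_int d = of_int m * real n" using assms by (simp add: field_simps)
      then have "d = m * int n" by (metis of_int_eq_iff of_int_mult of_int_of_nat_eq)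
      then show False using False by simp
    qed
    then show ?thesis using False by (simp add: pw sum_gp_strict zn)
  qed
qed

lemma shift_pow:
  assumes "n \<ge> (1::nat)"
  shows "m < n \<Longrightarrow> (cshift n ^^ i) x m = x ((m + i*(n-1)) mod n)"
proof (induction i arbitrary: m)
  case 0 then show ?case by simp
next
  case (Suc i)
  have lt: "(m+n-1) mod n < n" using assms by simp
  have "(cshift n ^^ Suc i) x m = (cshift n ^^ i) x ((m+n-1) mod n)"
    by (simp only: funpow.simps o_apply) (simp only: cshift_def)
  also have "\<dots> = x (((m+n-1) mod n + i*(n-1)) mod n)"
    using Suc.IH[OF lt] .
  also have "((m+n-1) mod n + i*(n-1)) mod n = (m+n-1 + i*(n-1)) mod n"
    by (simp add: mod_add_left_eq)
  also have "m+n-1 + i*(n-1) = m + Suc i*(n-1)"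
    using assms by (cases n) auto
  finally show ?case .
qed

lemma bij_rot:
  assumes "n \<ge> (1::nat)"
  shows "bij_betw (\<lambda>m. (m+c) mod n) {..<n} {..<n}"
proof -
  have inj: "inj_on (\<lambda>m. (m+c) mod n) {..<n}"
  proof
    fix a b assume a: "a \<in> {..<n}" and b: "b \<in> {..<n}" and e: "(a+c) mod n = (b+c) mod n"
    have "a mod n = b mod n"
      using e nat_mod_eq_iff by (simp add: mod_eq_iff_dvd_symdiff_nat)
    then show "a = b" using a b by simp
  qed
  have "(\<lambda>m. (m+c) mod n) ` {..<n} \<subseteq> {..<n}" using assms by auto
  then have "(\<lambda>m. (m+c) mod n) ` {..<n} = {..<n}"
    using inj by (simp add: endo_inj_surj)
  then show ?thesis using inj by (simp add: bij_betw_def)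
qed

lemma sum_rot:
  assumes "n \<ge> (1::nat)"
  shows "(\<Sum>m<n. f ((m+c) mod n)) = (\<Sum>m<n. (f m :: real))"
  using sum.reindex_bij_betw[OF bij_rot[OF assms, of c], of f] by simp

lemma dvd_iff:
  assumes "n \<ge> (1::nat)" "l < n"
  shows "int n dvd (int j - int l + int i) \<longleftrightarrow> l = (j+i) mod n"
proof -
  have "int n dvd (int j - int l + int i) \<longleftrightarrow> (int j + int i) mod int n = int l mod int n"
    by (simp add: mod_eq_dvd_iff algebra_simps)
  also have "\<dots> \<longleftrightarrow> int ((j+i) mod n) = int l" using assms by (simp add: zmod_int)
  finally show ?thesis by auto
qed

lemma xcorr_eq:
  assumes n: "n \<ge> (1::nat)"
  shows "xcorr n x x' i = complex_of_real (\<Sum>j<n. x j * x' ((j+i) mod n))"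
proof -
  have cc: "cis (2 * pi * real j * real k / real n) * cis (- 2 * pi * real l * real k / real n)
      * cis (2 * pi * real i * real k / real n)
      = cis (2*pi*real k * of_int (int j - int l + int i) / real n)" for j k l
  proof -
    have "cis (2 * pi * real j * real k / real n) * cis (- 2 * pi * real l * real k / real n)
      * cis (2 * pi * real i * real k / real n) = cis (2 * pi * real j * real k / real n
        + (- 2 * pi * real l * real k / real n) + 2 * pi * real i * real k / real n)"
      by (simp only: cis_mult)
    also have "2 * pi * real j * real k / real n
        + (- 2 * pi * real l * real k / real n) + 2 * pi * real i * real k / real n
        = 2*pi*real k * of_int (int j - int l + int i) / real n"
      using n by (simp add: field_simps)
    finally show ?thesis .
  qed
  have cd: "cnj (dft n (\<lambda>j. complex_of_real (x j)) k) = (\<Sum>j<n. complex_of_real (x j) * cis (2 * pi * real j * real k / real n))" for k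
    unfolding dft_def by (simp add: cis_cnj)
  have "xcorr n x x' i = (1 / of_nat n) * (\<Sum>k<n. (\<Sum>j<n. complex_of_real (x j) * cis (2 * pi * real j * real k / real n))
      * (\<Sum>l<n. complex_of_real (x' l) * cis (- 2 * pi * real l * real k / real n)) * cis (2 * pi * real i * real k / real n))"
    unfolding xcorr_def idft_def cd by (simp add: dft_def)
  also have "\<dots> = (1 / of_nat n) * (\<Sum>k<n. \<Sum>j<n. \<Sum>l<n.
      complex_of_real (x j * x' l) * cis (2*pi*real k * of_int (int j - int l + int i) / real n))"
  proof (intro arg_cong[where f="\<lambda>t. _ * t"] sum.cong refl)
    fix k
    have pt: "complex_of_real (x j) * cis (2 * pi * real j * real k / real n) *
          (complex_of_real (x' l) * cis (- 2 * pi * real l * real k / real n)) * cis (2 * pi * real i * real k / real n)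
        = complex_of_real (x j * x' l) * cis (2*pi*real k * of_int (int j - int l + int i) / real n)" for j l
    proof -
      have "complex_of_real (x j) * cis (2 * pi * real j * real k / real n) *
          (complex_of_real (x' l) * cis (- 2 * pi * real l * real k / real n)) * cis (2 * pi * real i * real k / real n)
        = complex_of_real (x j * x' l) * (cis (2 * pi * real j * real k / real n) * cis (- 2 * pi * real l * real k / real n)
      * cis (2 * pi * real i * real k / real n))" by (simp only: of_real_mult mult_ac)
      also have "\<dots> = complex_of_real (x j * x' l) * cis (2*pi*real k * of_int (int j - int l + int i) / real n)"
        by (simp only: cc)
      finally show ?thesis .
    qed
    show "(\<Sum>j<n. complex_of_real (x j) * cis (2 * pi * real j * real k / real n))
      * (\<Sum>l<n. complex_of_real (x' l) * cis (- 2 * pi * real l * real k / real n)) * cis (2 * pi * real i * real k / real n)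
      = (\<Sum>j<n. \<Sum>l<n. complex_of_real (x j * x' l) * cis (2*pi*real k * of_int (int j - int l + int i) / real n))"
      unfolding sum_product unfolding sum_distrib_right
      by (intro sum.cong refl) (rule pt)
  qed
  also have "\<dots> = (1 / of_nat n) * (\<Sum>j<n. \<Sum>l<n.
      complex_of_real (x j * x' l) * (\<Sum>k<n. cis (2*pi*real k * of_int (int j - int l + int i) / real n)))"
  proof (intro arg_cong[where f="\<lambda>t. _ * t"])
    have "(\<Sum>k<n. \<Sum>j<n. \<Sum>l<n. complex_of_real (x j * x' l) * cis (2*pi*real k * of_int (int j - int l + int i) / real n))
      = (\<Sum>j<n. \<Sum>l<n. \<Sum>k<n. complex_of_real (x j * x' l) * cis (2*pi*real k * of_int (int j - int l + int i) / real n))"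
      apply (rule trans[OF sum.swap])
      apply (rule sum.cong[OF refl])
      apply (rule sum.swap)
      done
    then show "(\<Sum>k<n. \<Sum>j<n. \<Sum>l<n. complex_of_real (x j * x' l) * cis (2*pi*real k * of_int (int j - int l + int i) / real n))
      = (\<Sum>j<n. \<Sum>l<n. complex_of_real (x j * x' l) * (\<Sum>k<n. cis (2*pi*real k * of_int (int j - int l + int i) / real n)))"
      by (simp only: sum_distrib_left)
  qed
  also have "\<dots> = (1 / of_nat n) * (\<Sum>j<n. \<Sum>l<n.
      (if l = (j+i) mod n then complex_of_real (x j * x' l) * of_nat n else 0))"
  proof (intro arg_cong[where f="\<lambda>t. _ * t"] sum.cong refl)
    fix j l assume l: "l \<in> {..<n}"
    have "(\<Sum>k<n. cis (2*pi*real k * of_int (int j - int l + int i) / real n))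
      = (if l = (j+i) mod n then of_nat n else 0)"
      using orth[OF n, of "int j - int l + int i"] dvd_iff[OF n, of l j i] l by simp
    then show "complex_of_real (x j * x' l) * (\<Sum>k<n. cis (2*pi*real k * of_int (int j - int l + int i) / real n))
      = (if l = (j+i) mod n then complex_of_real (x j * x' l) * of_nat n else 0)" by simp
  qed
  also have "\<dots> = (1 / of_nat n) * (\<Sum>j<n. complex_of_real (x j * x' ((j+i) mod n)) * of_nat n)"
    using n by (simp add: sum.delta)
  also have "\<dots> = complex_of_real (\<Sum>j<n. x j * x' ((j+i) mod n))"
    using n by (simp add: sum_distrib_right[symmetric])
  finally show ?thesis .
qed

lemma norm_eq:
  assumes n: "n \<ge> (1::nat)"
  shows "(vnorm n (vdiff x' ((cshift n ^^ i) x)))^2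
     = (vnorm n x)^2 + (vnorm n x')^2 - 2 * (\<Sum>j<n. x j * x' ((j+i) mod n))"
proof -
  have sq: "(vnorm n v)^2 = (\<Sum>j<n. (v j)^2)" for v
    unfolding vnorm_def by (simp add: sum_nonneg)
  define c where "c = i*(n-1)"
  have P: "m \<in> {..<n} \<Longrightarrow> (cshift n ^^ i) x m = x ((m + c) mod n)" for m using shift_pow[OF n] c_def by simp
  have A: "(\<Sum>m<n. (x ((m+c) mod n))^2) = (\<Sum>m<n. (x m)^2)"
    using sum_rot[OF n, of "\<lambda>m. (x m)^2"] by simp
  have B: "(\<Sum>m<n. x' m * x ((m+c) mod n)) = (\<Sum>j<n. x j * x' ((j+i) mod n))"
  proof -
    have "(\<Sum>j<n. x j * x' ((j+i) mod n)) = (\<Sum>j<n. x' ((j+i) mod n) * x (((j+i) mod n + c) mod n))"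
    proof (intro sum.cong refl)
      fix j assume j: "j \<in> {..<n}"
      have e1: "j+i+c = j + i*n" using n by (simp add: c_def diff_mult_distrib2)
      have "((j+i) mod n + c) mod n = (j+i+c) mod n" by (simp add: mod_add_left_eq)
      also have "\<dots> = j" unfolding e1 using j by simp
      finally show "x j * x' ((j+i) mod n) = x' ((j+i) mod n) * x (((j+i) mod n + c) mod n)" by simp
    qed
    also have "\<dots> = (\<Sum>m<n. x' m * x ((m+c) mod n))"
      using sum_rot[OF n, of "\<lambda>m. x' m * x ((m+c) mod n)" i] by simp
    finally show ?thesis by simp
  qed
  have "(vnorm n (vdiff x' ((cshift n ^^ i) x)))^2 = (\<Sum>m<n. (x' m - x ((m+c) mod n))^2)"
    unfolding sq vdiff_def by (intro sum.cong refl) (simp add: P)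
  also have "\<dots> = (\<Sum>m<n. (x' m)^2) + (\<Sum>m<n. (x ((m+c) mod n))^2) - 2 * (\<Sum>m<n. x' m * x ((m+c) mod n))"
    by (simp add: power2_diff sum.distrib sum_subtractf sum_distrib_left mult.assoc)
  finally show ?thesis using A B by (simp add: sq)
qed

theorem mainTheorem4:
  fixes n :: nat and x x' :: "nat \<Rightarrow> real" and h :: "real \<Rightarrow> real" and \<sigma> :: real
  assumes "n \<ge> 1"
  shows "(\<forall>i<n. Im (xcorr n x x' i) = 0 \<and>
           kvec (rbf_kernel h) n x x' i
             = h ((vnorm n x)^2 + (vnorm n x')^2 - 2 * Re (xcorr n x x' i)))
       \<and> (\<sigma> > 0 \<longrightarrow> (\<forall>i<n. kvec (gauss_kernel \<sigma>) n x x' i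
             = exp (- (1 / \<sigma>^2) * ((vnorm n x)^2 + (vnorm n x')^2 - 2 * Re (xcorr n x x' i)))))"
  proof -
  have key: "Im (xcorr n x x' i) = 0 \<and> (vnorm n (vdiff x' ((cshift n ^^ i) x)))^2
     = (vnorm n x)^2 + (vnorm n x')^2 - 2 * Re (xcorr n x x' i)" for i
    using xcorr_eq[OF assms, of x x' i] norm_eq[OF assms, of x' i x] by simp
  show ?thesis using key by (simp add: kvec_def rbf_kernel_def gauss_kernel_def)
qed

end
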